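(* Let $d\ge1$, $\nu>0$, $\mu>0$, and let $\mathbf{T}_1,\mathbf{T}_2$ be independent random vectors in $\mathbb{R}^d$ with Student densities $f_\nu$ and $f_\mu$ respectively, where $f_\nu(\mathbf{t})=\frac{\Gamma(\nu+\frac d2)}{\Gamma(\nu)\pi^{d/2}}(1+\Vert\mathbf{t}\Vert^2)^{-\nu-\frac d2}$. Then the density of $\mathbf{Y}=\mathbf{T}_1+\mathbf{T}_2$ is \[ f_{\mathbf{Y}}(\mathbf{x})=\sum_{n=0}^\infty c_n^{(\nu,\mu)}\phi_{n,\nu+\mu}(\mathbf{x}),\qquad\mathbf{x}\in\mathbb{R}^d, \] where \[ c_n^{(\nu,\mu)}=\frac{1}{B(\nu,\mu)}\frac{(\frac d2)_n}{n!}\int_0^1 t^{\mu+\frac d2-1}(1-t)^{\nu+\frac d2-1}(1-t+t^2)^n\,dt,\qquad n\ge0, \] are positive coefficients with $\sum_n c_n^{(\nu,\mu)}=1$.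
   Context: For $\eta>0$ and $n\in\mathbb{N}$, $\phi_{n,\eta}$ is the probability density on $\mathbb{R}^d$ \[ \phi_{n,\eta}(\mathbf{x})=\frac{\Gamma(\frac d2)}{\pi^{d/2}B(\eta,n+\frac d2)}\frac{\Vert\mathbf{x}\Vert^{2n}}{(1+\Vert\mathbf{x}\Vert^2)^{\eta+n+\frac d2}}. \] $B$ is the Beta function and $(a)_n=a(a+1)\cdots(a+n-1)$ is the Pochhammer symbol. $f_\nu$ is the Student density with $2\nu$ degrees of freedom. *)

theory Defs
  imports "HOL-Probability.Probability"
begin

definition student_density :: "real \<Rightarrow> 'a::euclidean_space \<Rightarrow> real" where
  "student_density \<nu> t =
     Gamma (\<nu> + real DIM('a) / 2) / (Gamma \<nu> * pi powr (real DIM('a) / 2))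
     * (1 + (norm t)\<^sup>2) powr (- \<nu> - real DIM('a) / 2)"

definition phi_density :: "nat \<Rightarrow> real \<Rightarrow> 'a::euclidean_space \<Rightarrow> real" where
  "phi_density n \<eta> x =
     Gamma (real DIM('a) / 2) / (pi powr (real DIM('a) / 2) * Beta \<eta> (real n + real DIM('a) / 2))
     * (norm x) ^ (2 * n) / (1 + (norm x)\<^sup>2) powr (\<eta> + real n + real DIM('a) / 2)"

definition c_coeff :: "real \<Rightarrow> real \<Rightarrow> nat \<Rightarrow> nat \<Rightarrow> real" where
  "c_coeff \<nu> \<mu> d n =
     1 / Beta \<nu> \<mu> * pochhammer (real d / 2) n / fact n
     * integral {0..1} (\<lambda>t::real. t powr (\<mu> + real d / 2 - 1) * (1 - t) powr (\<nu> + real d / 2 - 1)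
                                   * (1 - t + t\<^sup>2) ^ n)"

end

theory Submission
  imports Defs
begin

lemma gauss1:
  fixes c m :: real assumes c: "c > 0"
  shows "(\<integral>\<^sup>+t. ennreal (exp (- c * (t - m)\<^sup>2)) \<partial>lborel) = ennreal (sqrt (pi / c))"
proof -
  define \<sigma> where "\<sigma> = sqrt (1 / (2 * c))"
  have s: "\<sigma> > 0" "\<sigma>\<^sup>2 = 1 / (2*c)" using c by (auto simp: \<sigma>_def)
  have N: "(\<integral>\<^sup>+t. ennreal (normal_density m \<sigma> t) \<partial>lborel) = 1"
    using prob_space.emeasure_space_1[OF prob_space_normal_density[of \<sigma> m]] s
    by (simp add: emeasure_density)
  have eq: "normal_density m \<sigma> t = 1 / sqrt (pi / c) * exp (- c * (t - m)\<^sup>2)" for t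
  proof -
    have e: "2 * \<sigma>\<^sup>2 = 1 / c" "2 * pi * \<sigma>\<^sup>2 = pi / c" using s by simp_all
    show ?thesis
      unfolding normal_density_def e using c by (simp add: field_simps real_sqrt_divide)
  qed
  have "(\<integral>\<^sup>+t. ennreal (1 / sqrt (pi / c)) * ennreal (exp (- c * (t - m)\<^sup>2)) \<partial>lborel) = 1"
    unfolding N[symmetric] by (rule nn_integral_cong) (unfold eq, subst ennreal_mult', use c in auto)
  then have kI: "ennreal (1 / sqrt (pi / c)) * (\<integral>\<^sup>+t. ennreal (exp (- c * (t - m)\<^sup>2)) \<partial>lborel) = 1"
    by (subst nn_integral_cmult[symmetric]) auto
  have k: "ennreal (sqrt (pi / c)) * ennreal (1 / sqrt (pi / c)) = 1"
    using c by (subst ennreal_mult'[symmetric]) auto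
  have "(\<integral>\<^sup>+t. ennreal (exp (- c * (t - m)\<^sup>2)) \<partial>lborel)
     = (ennreal (sqrt (pi / c)) * ennreal (1 / sqrt (pi / c))) * (\<integral>\<^sup>+t. ennreal (exp (- c * (t - m)\<^sup>2)) \<partial>lborel)"
    unfolding k by simp
  also have "\<dots> = ennreal (sqrt (pi / c)) * (ennreal (1 / sqrt (pi / c)) * (\<integral>\<^sup>+t. ennreal (exp (- c * (t - m)\<^sup>2)) \<partial>lborel))"
    by (simp only: mult.assoc)
  also have "\<dots> = ennreal (sqrt (pi / c))" unfolding kI by simp
  finally show ?thesis .
qed

lemma gaussd:
  fixes c :: real and z :: "'a::euclidean_space" assumes c: "c > 0"
  shows "(\<integral>\<^sup>+y. ennreal (exp (- c * (norm (y - z))\<^sup>2)) \<partial>(lborel::'a measure))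
       = ennreal ((pi / c) powr (real DIM('a) / 2))"
proof -
  have "(\<integral>\<^sup>+y. ennreal (exp (- c * (norm (y - z))\<^sup>2)) \<partial>(lborel::'a measure))
     = (\<integral>\<^sup>+y. (\<Prod>b\<in>Basis. ennreal (exp (- c * (y \<bullet> b - z \<bullet> b)\<^sup>2))) \<partial>(lborel::'a measure))"
  proof (rule nn_integral_cong)
    fix y :: 'a
    have "(norm (y - z))\<^sup>2 = (y - z) \<bullet> (y - z)" by (simp add: power2_norm_eq_inner)
    also have "\<dots> = (\<Sum>b\<in>Basis. ((y - z) \<bullet> b) * ((y - z) \<bullet> b))" by (rule euclidean_inner)
    finally have "(norm (y - z))\<^sup>2 = (\<Sum>b\<in>Basis. (y \<bullet> b - z \<bullet> b)\<^sup>2)"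
      by (simp add: inner_diff_left power2_eq_square)
    then have "exp (- c * (norm (y - z))\<^sup>2) = (\<Prod>b\<in>Basis. exp (- c * (y \<bullet> b - z \<bullet> b)\<^sup>2))"
      by (simp add: sum_distrib_left exp_sum)
    then show "ennreal (exp (- c * (norm (y - z))\<^sup>2)) = (\<Prod>b\<in>Basis. ennreal (exp (- c * (y \<bullet> b - z \<bullet> b)\<^sup>2)))"
      by (simp add: prod_ennreal)
  qed
  also have "\<dots> = (\<Prod>b\<in>(Basis::'a set). (\<integral>\<^sup>+t. ennreal (exp (- c * (t - z \<bullet> b)\<^sup>2)) \<partial>lborel))"
    by (rule nn_integral_lborel_prod) auto
  also have "\<dots> = (\<Prod>b\<in>(Basis::'a set). ennreal (sqrt (pi / c)))"
    using gauss1[OF c] by simp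
  also have "\<dots> = ennreal (sqrt (pi / c) ^ DIM('a))"
    using c by (simp add: ennreal_power)
  also have "sqrt (pi / c) ^ DIM('a) = (pi / c) powr (real DIM('a) / 2)"
    using c by (simp add: sqrt_def root_powr_inverse powr_realpow[symmetric] powr_powr)
  finally show ?thesis .
qed


lemma ennreal_solve:
  assumes "ennreal a * X = ennreal b" "a > 0" "b \<ge> 0"
  shows "X = ennreal (b / a)"
proof -
  have k: "ennreal (1 / a) * ennreal a = 1" using assms by (subst ennreal_mult'[symmetric]) auto
  have "X = (ennreal (1 / a) * ennreal a) * X" unfolding k by simp
  also have "\<dots> = ennreal (1 / a) * (ennreal a * X)" by (simp only: mult.assoc)
  also have "\<dots> = ennreal (b / a)" unfolding assms(1) using assms
    by (subst ennreal_mult'[symmetric]) auto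
  finally show ?thesis .
qed

lemma gamma_scaled:
  fixes p c :: real assumes p: "p > 0" and c: "c > 0"
  shows "(\<integral>\<^sup>+r. ennreal (indicator {0<..} r * r powr (p - 1) * exp (- (c * r))) \<partial>lborel)
       = ennreal (Gamma p / c powr p)"
proof -
  let ?G = "\<lambda>t::real. ennreal (indicator {0..} t * t powr (p - 1) / exp t)"
  have "ennreal (Gamma p) = (\<integral>\<^sup>+t. ?G t \<partial>lborel)"
    using Gamma_conv_nn_integral_real[OF p] by simp
  also have "\<dots> = ennreal \<bar>c\<bar> * (\<integral>\<^sup>+x. ?G (0 + c * x) \<partial>lborel)"
    using c by (intro nn_integral_real_affine) auto
  also have "(\<integral>\<^sup>+x. ?G (0 + c * x) \<partial>lborel)
      = (\<integral>\<^sup>+x. ennreal (c powr (p - 1)) * ennreal (indicator {0<..} x * x powr (p - 1) * exp (- (c * x))) \<partial>lborel)"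
  proof (rule nn_integral_cong)
    fix x :: real
    show "?G (0 + c * x) = ennreal (c powr (p - 1)) * ennreal (indicator {0<..} x * x powr (p - 1) * exp (- (c * x)))"
    proof (cases "x > 0")
      case True
      then show ?thesis using c
        by (subst ennreal_mult'[symmetric]) (auto simp: powr_mult exp_minus field_simps)
    next
      case False
      then show ?thesis using c by (cases "x = 0") (auto simp: indicator_def zero_le_mult_iff)
    qed
  qed
  also have "\<dots> = ennreal (c powr (p - 1)) * (\<integral>\<^sup>+x. ennreal (indicator {0<..} x * x powr (p - 1) * exp (- (c * x))) \<partial>lborel)"
    by (rule nn_integral_cmult) auto
  finally have "ennreal (c powr p) * (\<integral>\<^sup>+x. ennreal (indicator {0<..} x * x powr (p - 1) * exp (- (c * x))) \<partial>lborel) = ennreal (Gamma p)"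
    using c by (simp add: mult.assoc[symmetric] ennreal_mult'[symmetric] powr_diff)
  then show ?thesis
    by (rule ennreal_solve) (use c p in \<open>auto intro: Gamma_real_pos less_imp_le\<close>)
qed


lemma beta_nn:
  fixes p q :: real assumes p: "p > 0" and q: "q > 0"
  shows "(\<integral>\<^sup>+t. ennreal (indicator {0<..<1} t * (t powr (p - 1) * (1 - t) powr (q - 1))) \<partial>lborel) = ennreal (Beta p q)"
proof -
  have "(\<integral>\<^sup>+t. ennreal (indicator {0<..<1} t * (t powr (p - 1) * (1 - t) powr (q - 1))) \<partial>lborel)
      = (\<integral>\<^sup>+t. ennreal (t powr (p - 1) * (1 - t) powr (q - 1)) * indicator {0..1} t \<partial>lborel)"
    by (rule nn_integral_cong) (auto simp: indicator_def)
  also have "\<dots> = ennreal (Beta p q)"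
    by (rule nn_integral_has_integral_lebesgue'[OF _ has_integral_Beta_real[OF p q]]) auto
  finally show ?thesis .
qed

lemma Jlem:
  fixes p q :: real and g :: "real \<Rightarrow> real"
  assumes p: "p > 0" and q: "q > 0" and g[measurable]: "g \<in> borel_measurable borel"
    and g0: "\<And>t. 0 \<le> t \<Longrightarrow> t \<le> 1 \<Longrightarrow> 0 \<le> g t" and g1: "\<And>t. 0 \<le> t \<Longrightarrow> t \<le> 1 \<Longrightarrow> g t \<le> 1"
  shows "(\<integral>\<^sup>+t. ennreal (indicator {0<..<1} t * (t powr (p - 1) * (1 - t) powr (q - 1) * g t)) \<partial>lborel)
           = ennreal (integral {0..1} (\<lambda>t. t powr (p - 1) * (1 - t) powr (q - 1) * g t))"
    and "(\<lambda>t. t powr (p - 1) * (1 - t) powr (q - 1) * g t) integrable_on {0..1}"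
proof -
  let ?F = "\<lambda>t. t powr (p - 1) * (1 - t) powr (q - 1) * g t"
  let ?N = "(\<integral>\<^sup>+t. ennreal (indicator {0..1} t * ?F t) \<partial>lborel)"
  have eqN: "(\<integral>\<^sup>+t. ennreal (indicator {0<..<1} t * ?F t) \<partial>lborel) = ?N"
    by (rule nn_integral_cong) (auto simp: indicator_def)
  have "?N \<le> (\<integral>\<^sup>+t. ennreal (indicator {0<..<1} t * (t powr (p - 1) * (1 - t) powr (q - 1))) \<partial>lborel)"
    by (rule nn_integral_mono)
       (auto simp: indicator_def g1 g0 intro!: ennreal_leI mult_left_le[OF g1] mult_nonneg_nonneg)
  also have "\<dots> = ennreal (Beta p q)" by (rule beta_nn[OF p q])
  finally have "?N < top" using ennreal_less_top order.strict_trans1 by blast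
  then obtain r where r: "r \<ge> 0" "?N = ennreal r" by (auto simp: less_top_ennreal)
  have "((\<lambda>t. indicator {0..1} t * ?F t) has_integral r) UNIV"
    by (rule nn_integral_has_integral) (use r in \<open>auto simp: indicator_def g0\<close>)
  moreover have "(\<lambda>t. indicator {0..1} t * ?F t) = (\<lambda>t. if t \<in> {0..1} then ?F t else 0)"
    by (auto simp: indicator_def)
  ultimately have hi: "(?F has_integral r) {0..1}"
    by (simp only: has_integral_restrict_UNIV)
  then show "?F integrable_on {0..1}" by blast
  show "(\<integral>\<^sup>+t. ennreal (indicator {0<..<1} t * ?F t) \<partial>lborel) = ennreal (integral {0..1} ?F)"
    using eqN r hi by (simp add: integral_unique)
qed

lemma binom_poch:
  fixes q E :: real assumes "0 \<le> q" "q < 1"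
  shows "(\<lambda>n. pochhammer E n / fact n * q ^ n) sums (1 - q) powr (- E)"
proof -
  have "(\<lambda>n. ((- E) gchoose n) * (- q) ^ n) sums (1 + (- q)) powr (- E)"
    by (rule gen_binomial_real) (use assms in auto)
  moreover have "((- E) gchoose n) * (- q) ^ n = pochhammer E n / fact n * q ^ n" for n
  proof -
    have m: "(- 1 :: real) ^ n * (- 1) ^ n = 1"
      by (simp add: power_mult_distrib[symmetric])
    have "((- E) gchoose n) * (- q) ^ n = ((- 1) ^ n * (- 1) ^ n) * (pochhammer E n / fact n * q ^ n)"
      unfolding gbinomial_pochhammer power_minus[of q n] by simp
    then show ?thesis unfolding m by simp
  qed
  ultimately show ?thesis by simp
qed


lemma distributed_add_euclid:
  fixes X Y :: "'s \<Rightarrow> 'a::euclidean_space" and f g :: "'a \<Rightarrow> ennreal"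
  assumes P: "prob_space M" and indep: "prob_space.indep_var M borel X borel Y"
    and X: "distributed M lborel X f" and Y: "distributed M lborel Y g"
  shows "distributed M lborel (\<lambda>\<omega>. X \<omega> + Y \<omega>) (\<lambda>x. \<integral>\<^sup>+y. f (x - y) * g y \<partial>lborel)"
proof -
  interpret prob_space M by (rule P)
  have fg[measurable]: "f \<in> borel_measurable borel" "g \<in> borel_measurable borel"
    using distributed_borel_measurable[OF X] distributed_borel_measurable[OF Y] by simp_all
  have rX[measurable]: "X \<in> measurable M borel" and rY[measurable]: "Y \<in> measurable M borel"
    using distributed_measurable[OF X] distributed_measurable[OF Y] by (auto cong: measurable_cong_sets)
  have fin1: "finite_measure (density lborel f)"
    using X by (rule distributed_finite_measure_density)
  have fin2: "finite_measure (density lborel g)"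
    using Y by (rule distributed_finite_measure_density)
  interpret D1: finite_measure "density lborel f" by (rule fin1)
  interpret D2: finite_measure "density lborel g" by (rule fin2)
  interpret DD: pair_sigma_finite "density lborel f" "density lborel g"
    by (intro pair_sigma_finite.intro D1.sigma_finite_measure D2.sigma_finite_measure)
  have dX: "distr M borel X = density lborel f"
    using distributed_distr_eq_density[OF X] by (simp cong: distr_cong)
  have dY: "distr M borel Y = density lborel g"
    using distributed_distr_eq_density[OF Y] by (simp cong: distr_cong)
  have "distr M borel (\<lambda>x. X x + Y x) = distr (distr M (borel \<Otimes>\<^sub>M borel) (\<lambda>x. (X x, Y x))) borel (\<lambda>(x, y). x + y)"
    by (subst distr_distr) (auto simp: o_def)
  also have "distr M (borel \<Otimes>\<^sub>M borel) (\<lambda>x. (X x, Y x)) = distr M borel X \<Otimes>\<^sub>M distr M borel Y"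
    using indep unfolding indep_var_distribution_eq by simp
  also have "\<dots> = density lborel f \<Otimes>\<^sub>M density lborel g" by (simp add: dX dY)
  also have "distr (density lborel f \<Otimes>\<^sub>M density lborel g) borel (\<lambda>(x, y). x + y)
     = density lborel (\<lambda>x. \<integral>\<^sup>+y. f (x - y) * g y \<partial>lborel)"
  proof (rule measure_eqI)
    show "sets (distr (density lborel f \<Otimes>\<^sub>M density lborel g) borel (\<lambda>(x, y). x + y)) =
      sets (density lborel (\<lambda>x. \<integral>\<^sup>+y. f (x - y) * g y \<partial>lborel))" by simp
    fix A assume "A \<in> sets (distr (density lborel f \<Otimes>\<^sub>M density lborel g) borel (\<lambda>(x, y). x + y))"
    then have [measurable]: "A \<in> sets borel" by simp
    have "emeasure (distr (density lborel f \<Otimes>\<^sub>M density lborel g) borel (\<lambda>(x, y). x + y)) A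
        = (\<integral>\<^sup>+p. indicator A (fst p + snd p) \<partial>(density lborel f \<Otimes>\<^sub>M density lborel g))"
      by (subst nn_integral_indicator[symmetric], simp, subst nn_integral_distr) (auto simp: split_beta')
    also have "\<dots> = (\<integral>\<^sup>+x. \<integral>\<^sup>+y. indicator A (x + y) \<partial>density lborel g \<partial>density lborel f)"
      by (subst sigma_finite_measure.nn_integral_fst[OF D2.sigma_finite_measure, symmetric]) auto
    also have "\<dots> = (\<integral>\<^sup>+x. f x * (\<integral>\<^sup>+y. g y * indicator A (x + y) \<partial>lborel) \<partial>lborel)"
      by (simp add: nn_integral_density)
    also have "\<dots> = (\<integral>\<^sup>+x. (\<integral>\<^sup>+y. g y * (f x * indicator A (x + y)) \<partial>lborel) \<partial>lborel)"
      by (intro nn_integral_cong) (subst nn_integral_cmult[symmetric], auto simp: ac_simps)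
    also have "\<dots> = (\<integral>\<^sup>+y. (\<integral>\<^sup>+x. g y * (f x * indicator A (x + y)) \<partial>lborel) \<partial>lborel)"
      by (intro lborel_pair.Fubini') simp
    also have "\<dots> = (\<integral>\<^sup>+y. (\<integral>\<^sup>+x. f (x - y) * g y * indicator A x \<partial>lborel) \<partial>lborel)"
    proof (rule nn_integral_cong)
      fix y :: 'a assume "y \<in> space lborel"
      have "(\<integral>\<^sup>+x. g y * (f x * indicator A (x + y)) \<partial>lborel)
          = (\<integral>\<^sup>+x. g y * (f x * indicator A (x + y)) \<partial>distr lborel borel ((+) (- y)))"
        by (simp add: lborel_distr_plus)
      also have "\<dots> = (\<integral>\<^sup>+x. f (x - y) * g y * indicator A x \<partial>lborel)"
        by (subst nn_integral_distr) (auto simp: ac_simps)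
      finally show "(\<integral>\<^sup>+x. g y * (f x * indicator A (x + y)) \<partial>lborel) = (\<integral>\<^sup>+x. f (x - y) * g y * indicator A x \<partial>lborel)" .
    qed
    also have "\<dots> = (\<integral>\<^sup>+x. (\<integral>\<^sup>+y. f (x - y) * g y * indicator A x \<partial>lborel) \<partial>lborel)"
      by (intro lborel_pair.Fubini') simp
    also have "\<dots> = emeasure (density lborel (\<lambda>x. \<integral>\<^sup>+y. f (x - y) * g y \<partial>lborel)) A"
      by (auto simp: emeasure_density nn_integral_multc intro!: nn_integral_cong)
    finally show "emeasure (distr (density lborel f \<Otimes>\<^sub>M density lborel g) borel (\<lambda>(x, y). x + y)) A =
      emeasure (density lborel (\<lambda>x. \<integral>\<^sup>+y. f (x - y) * g y \<partial>lborel)) A" .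
  qed
  finally have "distr M borel (\<lambda>x. X x + Y x) = density lborel (\<lambda>x. \<integral>\<^sup>+y. f (x - y) * g y \<partial>lborel)" .
  then show ?thesis unfolding distributed_def
    by (auto cong: distr_cong measurable_cong_sets)
qed


lemma swap_lb:
  fixes f :: "'a::euclidean_space \<Rightarrow> 'b::euclidean_space \<Rightarrow> ennreal"
  assumes "case_prod f \<in> borel_measurable (lborel \<Otimes>\<^sub>M lborel)"
  shows "(\<integral>\<^sup>+y. \<integral>\<^sup>+x. f x y \<partial>lborel \<partial>lborel) = (\<integral>\<^sup>+x. \<integral>\<^sup>+y. f x y \<partial>lborel \<partial>lborel)"
  by (rule pair_sigma_finite.Fubini'[OF pair_sigma_finite.intro[OF sigma_finite_lborel sigma_finite_lborel] assms])

lemma student_rep: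
  fixes \<nu> :: real and z :: "'a::euclidean_space"
  assumes \<nu>: "\<nu> > 0"
  shows "ennreal (student_density \<nu> z) = ennreal (1 / (Gamma \<nu> * pi powr (real DIM('a) / 2))) *
    (\<integral>\<^sup>+u. ennreal (indicator {0<..} u * u powr (\<nu> + real DIM('a) / 2 - 1) * exp (- ((1 + (norm z)\<^sup>2) * u))) \<partial>lborel)"
proof -
  let ?a = "\<nu> + real DIM('a) / 2"
  have a: "?a > 0" using \<nu> by (simp add: add_pos_nonneg)
  have c: "1 + (norm z)\<^sup>2 > 0" by (simp add: add_pos_nonneg)
  have "(\<integral>\<^sup>+u. ennreal (indicator {0<..} u * u powr (?a - 1) * exp (- ((1 + (norm z)\<^sup>2) * u))) \<partial>lborel)
     = ennreal (Gamma ?a / (1 + (norm z)\<^sup>2) powr ?a)"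
    by (rule gamma_scaled[OF a c])
  moreover have "student_density \<nu> z = 1 / (Gamma \<nu> * pi powr (real DIM('a) / 2)) * (Gamma ?a / (1 + (norm z)\<^sup>2) powr ?a)"
  proof -
    have eq: "- \<nu> - real DIM('a) / 2 = - ?a" by simp
    have "(1 + (norm z)\<^sup>2) powr (- \<nu> - real DIM('a) / 2) = 1 / (1 + (norm z)\<^sup>2) powr ?a"
      by (subst eq) (rule powr_minus_divide)
    then show ?thesis unfolding student_density_def by simp
  qed
  moreover have "0 \<le> 1 / (Gamma \<nu> * pi powr (real DIM('a) / 2))"
    using \<nu> by (simp add: Gamma_real_pos less_imp_le)
  ultimately show ?thesis by (simp only: ennreal_mult'[symmetric])
qed

lemma complete_square:
  fixes x y :: "'a::real_inner" and s u :: real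
  assumes "s + u > 0"
  shows "s * (norm y)\<^sup>2 + u * (norm (x - y))\<^sup>2
       = s * u / (s + u) * (norm x)\<^sup>2 + (s + u) * (norm (y - (u / (s + u)) *\<^sub>R x))\<^sup>2"
proof -
  have e: "(norm v)\<^sup>2 = v \<bullet> v" for v :: 'a by (simp add: power2_norm_eq_inner)
  define c where "c = u / (s + u)"
  have 1: "(y - c *\<^sub>R x) \<bullet> (y - c *\<^sub>R x) = y \<bullet> y - 2 * c * (x \<bullet> y) + c\<^sup>2 * (x \<bullet> x)"
    by (simp add: inner_diff_left inner_diff_right inner_commute algebra_simps power2_eq_square)
  have 2: "(x - y) \<bullet> (x - y) = x \<bullet> x - 2 * (x \<bullet> y) + y \<bullet> y"
    by (simp add: inner_diff_left inner_diff_right inner_commute algebra_simps)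
  have 3: "s * P + u * (R - 2 * Q + P) = s * u / (s + u) * R + (s + u) * (P - 2 * c * Q + c\<^sup>2 * R)" for P Q R :: real
  proof -
    have hc: "(s + u) * c = u" unfolding c_def using assms by simp
    have h2: "s * u / (s + u) = s * c" unfolding c_def by simp
    have "s * c * R + (s + u) * (P - 2 * c * Q + c\<^sup>2 * R) = ((s + u) * c) * R + (s + u) * P - 2 * ((s + u) * c) * Q + ((s + u) * c) * c * R - ((s + u) * c) * R + s * c * R"
      by (simp add: algebra_simps power2_eq_square)
    also have "\<dots> = u * R + (s + u) * P - 2 * u * Q + u * c * R - u * R + s * c * R" by (simp only: hc)
    also have "\<dots> = u * R + (s + u) * P - 2 * u * Q + ((s + u) * c) * R - u * R" by (simp add: algebra_simps)
    also have "\<dots> = s * P + u * (R - 2 * Q + P)" unfolding hc by (simp add: algebra_simps)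
    finally show ?thesis unfolding h2 by simp
  qed
  show ?thesis unfolding e 1 2 c_def[symmetric] by (rule 3)
qed


lemma kernel_y:
  fixes x :: "'a::euclidean_space" and s u p q :: real
  shows "(\<integral>\<^sup>+y. ennreal (indicator {0<..} s * s powr p * exp (- ((1 + (norm y)\<^sup>2) * s))) *
               ennreal (indicator {0<..} u * u powr q * exp (- ((1 + (norm (x - y))\<^sup>2) * u))) \<partial>lborel)
       = ennreal (indicator {0<..} s * indicator {0<..} u * (s powr p * u powr q * exp (- (s + u)) *
             exp (- (s * u / (s + u) * (norm x)\<^sup>2)) * (pi / (s + u)) powr (real DIM('a) / 2)))"
proof (cases "s > 0 \<and> u > 0")
  case True
  then have su: "s > 0" "u > 0" "s + u > 0" by auto
  define z where "z = (u / (s + u)) *\<^sub>R x"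
  define C where "C = s powr p * u powr q * exp (- (s + u)) * exp (- (s * u / (s + u) * (norm x)\<^sup>2))"
  have C0: "C \<ge> 0" unfolding C_def by simp
  have pt: "ennreal (indicator {0<..} s * s powr p * exp (- ((1 + (norm y)\<^sup>2) * s))) *
               ennreal (indicator {0<..} u * u powr q * exp (- ((1 + (norm (x - y))\<^sup>2) * u)))
        = ennreal C * ennreal (exp (- (s + u) * (norm (y - z))\<^sup>2))" for y :: 'a
  proof -
    have cs: "s * (norm y)\<^sup>2 + u * (norm (x - y))\<^sup>2 = s * u / (s + u) * (norm x)\<^sup>2 + (s + u) * (norm (y - z))\<^sup>2"
      unfolding z_def by (rule complete_square) (use su in simp)
    have ex: "- ((1 + (norm y)\<^sup>2) * s) + - ((1 + (norm (x - y))\<^sup>2) * u)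
       = - (s + u) + - (s * u / (s + u) * (norm x)\<^sup>2) + - (s + u) * (norm (y - z))\<^sup>2"
      using cs by (simp add: algebra_simps)
    have "exp (- ((1 + (norm y)\<^sup>2) * s)) * exp (- ((1 + (norm (x - y))\<^sup>2) * u))
        = exp (- ((1 + (norm y)\<^sup>2) * s) + - ((1 + (norm (x - y))\<^sup>2) * u))"
      by (simp only: exp_add)
    also have "\<dots> = exp (- (s + u) + - (s * u / (s + u) * (norm x)\<^sup>2) + - (s + u) * (norm (y - z))\<^sup>2)"
      by (simp only: ex)
    also have "\<dots> = exp (- (s + u)) * exp (- (s * u / (s + u) * (norm x)\<^sup>2)) * exp (- (s + u) * (norm (y - z))\<^sup>2)"
      by (simp only: exp_add)
    finally have e: "exp (- ((1 + (norm y)\<^sup>2) * s)) * exp (- ((1 + (norm (x - y))\<^sup>2) * u))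
        = exp (- (s + u)) * exp (- (s * u / (s + u) * (norm x)\<^sup>2)) * exp (- (s + u) * (norm (y - z))\<^sup>2)" .
    have "ennreal (indicator {0<..} s * s powr p * exp (- ((1 + (norm y)\<^sup>2) * s))) *
               ennreal (indicator {0<..} u * u powr q * exp (- ((1 + (norm (x - y))\<^sup>2) * u)))
         = ennreal ((s powr p * u powr q) * (exp (- ((1 + (norm y)\<^sup>2) * s)) * exp (- ((1 + (norm (x - y))\<^sup>2) * u))))"
      using su by (subst ennreal_mult'[symmetric]) (auto simp: ac_simps)
    also have "\<dots> = ennreal (C * exp (- (s + u) * (norm (y - z))\<^sup>2))"
      unfolding e C_def by (simp add: ac_simps)
    also have "\<dots> = ennreal C * ennreal (exp (- (s + u) * (norm (y - z))\<^sup>2))"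
      by (rule ennreal_mult'[OF C0])
    finally show ?thesis .
  qed
  have "(\<integral>\<^sup>+y. ennreal (indicator {0<..} s * s powr p * exp (- ((1 + (norm y)\<^sup>2) * s))) *
               ennreal (indicator {0<..} u * u powr q * exp (- ((1 + (norm (x - y))\<^sup>2) * u))) \<partial>lborel)
      = (\<integral>\<^sup>+y. ennreal C * ennreal (exp (- (s + u) * (norm (y - z))\<^sup>2)) \<partial>lborel)"
    by (simp only: pt)
  also have "\<dots> = ennreal C * (\<integral>\<^sup>+y. ennreal (exp (- (s + u) * (norm (y - z))\<^sup>2)) \<partial>lborel)"
    by (rule nn_integral_cmult) simp
  also have "\<dots> = ennreal C * ennreal ((pi / (s + u)) powr (real DIM('a) / 2))"
    using gaussd[OF su(3), of z] by simp
  also have "\<dots> = ennreal (C * (pi / (s + u)) powr (real DIM('a) / 2))"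
    by (rule ennreal_mult'[OF C0, symmetric])
  finally show ?thesis using su unfolding C_def by simp
next
  case False
  then have "ennreal (indicator {0<..} s * s powr p * exp (- ((1 + (norm y)\<^sup>2) * s))) *
               ennreal (indicator {0<..} u * u powr q * exp (- ((1 + (norm (x - y))\<^sup>2) * u))) = 0" for y :: 'a
    by (auto simp: indicator_def)
  then show ?thesis using False by (simp add: indicator_def)
qed


lemma rt_identity:
  fixes r t p q dd X :: real
  assumes r: "r > 0" and t: "0 < t" "t < 1"
  shows "r * ((r * t) powr (p - 1) * (r - r * t) powr (q - 1) * exp (- (r * t + (r - r * t))) *
             exp (- (r * t * (r - r * t) / (r * t + (r - r * t)) * X)) * (pi / (r * t + (r - r * t))) powr dd)
       = pi powr dd * (t powr (p - 1) * (1 - t) powr (q - 1)) * (r powr (p + q - dd - 1) * exp (- ((1 + t * (1 - t) * X) * r)))"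
proof -
  have h1: "r * t + (r - r * t) = r" by simp
  have h2: "r - r * t = r * (1 - t)" by (simp add: algebra_simps)
  have h3: "(r * t) powr (p - 1) = r powr (p - 1) * t powr (p - 1)" using r t by (simp add: powr_mult)
  have h4: "(r * (1 - t)) powr (q - 1) = r powr (q - 1) * (1 - t) powr (q - 1)" using r t by (simp add: powr_mult)
  have h5: "(pi / r) powr dd = pi powr dd / r powr dd" using r by (simp add: powr_divide)
  have h6: "r * r powr (p - 1) * r powr (q - 1) / r powr dd = r powr (p + q - dd - 1)"
  proof -
    have "r * r powr (p - 1) * r powr (q - 1) = r powr (1 + (p - 1) + (q - 1))"
      using r by (simp add: powr_add powr_diff)
    then show ?thesis using r by (simp add: powr_diff[symmetric] algebra_simps)
  qed
  have h7: "exp (- r) * exp (- (r * (r * (1 - t)) * t / r * X)) = exp (- ((1 + t * (1 - t) * X) * r))"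
  proof -
    have a: "r * (r * (1 - t)) * t / r * X = t * (1 - t) * X * r" using r by (simp add: field_simps)
    have b: "- r + - (t * (1 - t) * X * r) = - ((1 + t * (1 - t) * X) * r)" by (simp add: algebra_simps)
    show ?thesis unfolding a exp_add[symmetric] b ..
  qed
  have "r * ((r * t) powr (p - 1) * (r - r * t) powr (q - 1) * exp (- (r * t + (r - r * t))) *
             exp (- (r * t * (r - r * t) / (r * t + (r - r * t)) * X)) * (pi / (r * t + (r - r * t))) powr dd)
      = (r * r powr (p - 1) * r powr (q - 1) / r powr dd) * pi powr dd * (t powr (p - 1) * (1 - t) powr (q - 1))
          * (exp (- r) * exp (- (r * (r * (1 - t)) * t / r * X)))"
    by (unfold h1, unfold h2 h3 h4 h5, simp add: ac_simps)
  also have "\<dots> = pi powr dd * (t powr (p - 1) * (1 - t) powr (q - 1)) * (r powr (p + q - dd - 1) * exp (- ((1 + t * (1 - t) * X) * r)))"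
    unfolding h6 h7 by (simp add: ac_simps)
  finally show ?thesis .
qed

lemma su_to_rt:
  fixes p q dd X :: real
  assumes X: "X \<ge> 0" and A: "p + q - dd > 0"
  shows "(\<integral>\<^sup>+s. \<integral>\<^sup>+u. ennreal (indicator {0<..} s * indicator {0<..} u * (s powr (p - 1) * u powr (q - 1) *
             exp (- (s + u)) * exp (- (s * u / (s + u) * X)) * (pi / (s + u)) powr dd)) \<partial>lborel \<partial>lborel)
       = (\<integral>\<^sup>+t. ennreal (indicator {0<..<1} t * (pi powr dd * (t powr (p - 1) * (1 - t) powr (q - 1)) *
             (Gamma (p + q - dd) / (1 + t * (1 - t) * X) powr (p + q - dd)))) \<partial>lborel)"
proof -
  define G where "G s u = indicator {0<..} s * indicator {0<..} u * (s powr (p - 1) * u powr (q - 1) *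
             exp (- (s + u)) * exp (- (s * u / (s + u) * X)) * (pi / (s + u)) powr dd)" for s u :: real
  define H where "H r t = indicator {0<..} r * indicator {0<..<1} t * (pi powr dd * (t powr (p - 1) * (1 - t) powr (q - 1)) *
             (r powr (p + q - dd - 1) * exp (- ((1 + t * (1 - t) * X) * r))))" for r t :: real
  have [measurable]: "case_prod G \<in> borel_measurable (borel \<Otimes>\<^sub>M borel)" unfolding G_def by measurable
  have [measurable]: "case_prod H \<in> borel_measurable (borel \<Otimes>\<^sub>M borel)" unfolding H_def by measurable
  have step1: "(\<integral>\<^sup>+u. ennreal (G s u) \<partial>lborel) = (\<integral>\<^sup>+r. ennreal (G s (r - s)) \<partial>lborel)" for s
    using nn_integral_real_affine[of "\<lambda>u. ennreal (G s u)" 1 "- s"] by simp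
  have step3: "(\<integral>\<^sup>+s. ennreal (G s (r - s)) \<partial>lborel) = (\<integral>\<^sup>+t. ennreal (H r t) \<partial>lborel)" for r
  proof (cases "r > 0")
    case True
    have "(\<integral>\<^sup>+s. ennreal (G s (r - s)) \<partial>lborel) = ennreal \<bar>r\<bar> * (\<integral>\<^sup>+t. ennreal (G (0 + r * t) (r - (0 + r * t))) \<partial>lborel)"
      using True by (intro nn_integral_real_affine) auto
    also have "\<dots> = (\<integral>\<^sup>+t. ennreal r * ennreal (G (r * t) (r - r * t)) \<partial>lborel)"
      using True by (subst nn_integral_cmult) auto
    also have "\<dots> = (\<integral>\<^sup>+t. ennreal (H r t) \<partial>lborel)"
    proof (rule nn_integral_cong)
      fix t :: real
      show "ennreal r * ennreal (G (r * t) (r - r * t)) = ennreal (H r t)"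
      proof (cases "0 < t \<and> t < 1")
        case tt: True
        have i1: "indicator {0<..} (r * t) = (1::real)" "indicator {0<..} (r - r * t) = (1::real)"
          "indicator {0<..} r = (1::real)" "indicator {0<..<1} t = (1::real)"
          using True tt by (auto simp: indicator_def algebra_simps)
        have "r * G (r * t) (r - r * t) = r * ((r * t) powr (p - 1) * (r - r * t) powr (q - 1) * exp (- (r * t + (r - r * t))) *
             exp (- (r * t * (r - r * t) / (r * t + (r - r * t)) * X)) * (pi / (r * t + (r - r * t))) powr dd)"
          by (simp only: G_def i1 mult_1_left)
        also have "\<dots> = H r t"
          using tt unfolding rt_identity[OF True conjunct1[OF tt] conjunct2[OF tt]] by (simp only: H_def i1 mult_1_left)
        finally have "r * G (r * t) (r - r * t) = H r t" .
        then show ?thesis using True by (simp add: ennreal_mult'[symmetric])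
      next
        case False
        then have "G (r * t) (r - r * t) = 0" "H r t = 0" using True
          by (auto simp: G_def H_def indicator_def mult_le_0_iff zero_less_mult_iff)
        then show ?thesis by simp
      qed
    qed
    finally show ?thesis .
  next
    case False
    then have "G s (r - s) = 0" "H r t = 0" for s t by (auto simp: G_def H_def indicator_def)
    then show ?thesis by simp
  qed
  have step5: "(\<integral>\<^sup>+r. ennreal (H r t) \<partial>lborel) = ennreal (indicator {0<..<1} t * (pi powr dd * (t powr (p - 1) * (1 - t) powr (q - 1)) *
             (Gamma (p + q - dd) / (1 + t * (1 - t) * X) powr (p + q - dd))))" for t
  proof (cases "0 < t \<and> t < 1")
    case tt: True
    define P where "P = pi powr dd * (t powr (p - 1) * (1 - t) powr (q - 1))"
    have P0: "P \<ge> 0" unfolding P_def by simp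
    have c: "1 + t * (1 - t) * X > 0" using tt X by (simp add: add_pos_nonneg)
    have "(\<integral>\<^sup>+r. ennreal (H r t) \<partial>lborel)
        = (\<integral>\<^sup>+r. ennreal P * ennreal (indicator {0<..} r * r powr (p + q - dd - 1) * exp (- ((1 + t * (1 - t) * X) * r))) \<partial>lborel)"
      by (rule nn_integral_cong) (use tt in \<open>simp add: H_def P_def ennreal_mult'[symmetric] P0 ac_simps\<close>)
    also have "\<dots> = ennreal P * ennreal (Gamma (p + q - dd) / (1 + t * (1 - t) * X) powr (p + q - dd))"
      by (subst nn_integral_cmult) (auto simp: gamma_scaled[OF A c])
    also have "\<dots> = ennreal (indicator {0<..<1} t * (P * (Gamma (p + q - dd) / (1 + t * (1 - t) * X) powr (p + q - dd))))"
      using tt by (simp add: ennreal_mult'[OF P0, symmetric])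
    finally show ?thesis unfolding P_def .
  next
    case False
    then have "H r t = 0" for r by (auto simp: H_def indicator_def)
    moreover have "indicator {0<..<1} t = (0::real)" using False by (auto simp: indicator_def)
    ultimately show ?thesis by simp
  qed
  have "(\<integral>\<^sup>+s. \<integral>\<^sup>+u. ennreal (G s u) \<partial>lborel \<partial>lborel) = (\<integral>\<^sup>+s. \<integral>\<^sup>+r. ennreal (G s (r - s)) \<partial>lborel \<partial>lborel)"
    by (simp only: step1)
  also have "\<dots> = (\<integral>\<^sup>+r. \<integral>\<^sup>+s. ennreal (G s (r - s)) \<partial>lborel \<partial>lborel)"
    by (rule swap_lb[symmetric]) measurable
  also have "\<dots> = (\<integral>\<^sup>+r. \<integral>\<^sup>+t. ennreal (H r t) \<partial>lborel \<partial>lborel)"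
    by (simp only: step3)
  also have "\<dots> = (\<integral>\<^sup>+t. \<integral>\<^sup>+r. ennreal (H r t) \<partial>lborel \<partial>lborel)"
    by (rule swap_lb) measurable
  also have "\<dots> = (\<integral>\<^sup>+t. ennreal (indicator {0<..<1} t * (pi powr dd * (t powr (p - 1) * (1 - t) powr (q - 1)) *
             (Gamma (p + q - dd) / (1 + t * (1 - t) * X) powr (p + q - dd)))) \<partial>lborel)"
    by (simp only: step5)
  finally show ?thesis unfolding G_def .
qed


lemma conv_formula:
  fixes \<nu> \<mu> :: real and x :: "'a::euclidean_space"
  assumes \<nu>: "\<nu> > 0" and \<mu>: "\<mu> > 0"
  shows "(\<integral>\<^sup>+y. ennreal (student_density \<nu> (x - y)) * ennreal (student_density \<mu> y) \<partial>lborel)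
    = ennreal (1 / (Gamma \<nu> * pi powr (real DIM('a) / 2)) * (1 / (Gamma \<mu> * pi powr (real DIM('a) / 2)))) *
      (\<integral>\<^sup>+t. ennreal (indicator {0<..<1} t * (pi powr (real DIM('a) / 2) *
          (t powr (\<mu> + real DIM('a) / 2 - 1) * (1 - t) powr (\<nu> + real DIM('a) / 2 - 1)) *
          (Gamma ((\<mu> + real DIM('a) / 2) + (\<nu> + real DIM('a) / 2) - real DIM('a) / 2) /
           (1 + t * (1 - t) * (norm x)\<^sup>2) powr ((\<mu> + real DIM('a) / 2) + (\<nu> + real DIM('a) / 2) - real DIM('a) / 2)))) \<partial>lborel)"
proof -
  define d where "d = real DIM('a)"
  define K1 where "K1 = 1 / (Gamma \<nu> * pi powr (d / 2))"
  define K2 where "K2 = 1 / (Gamma \<mu> * pi powr (d / 2))"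
  have K1: "K1 \<ge> 0" and K2: "K2 \<ge> 0" using \<nu> \<mu> by (auto simp: K1_def K2_def Gamma_real_pos less_imp_le)
  define S where "S s y = ennreal (indicator {0<..} s * s powr (\<mu> + d / 2 - 1) * exp (- ((1 + (norm y)\<^sup>2) * s)))" for s and y :: 'a
  define U where "U u y = ennreal (indicator {0<..} u * u powr (\<nu> + d / 2 - 1) * exp (- ((1 + (norm (x - y))\<^sup>2) * u)))" for u and y :: 'a
  have [measurable]: "case_prod S \<in> borel_measurable (borel \<Otimes>\<^sub>M borel)" unfolding S_def by measurable
  have [measurable]: "case_prod U \<in> borel_measurable (borel \<Otimes>\<^sub>M borel)" unfolding U_def by measurable
  have pt: "ennreal (student_density \<nu> (x - y)) * ennreal (student_density \<mu> y)
      = ennreal (K1 * K2) * (\<integral>\<^sup>+s. \<integral>\<^sup>+u. S s y * U u y \<partial>lborel \<partial>lborel)" for y :: 'a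
  proof -
    have "ennreal (student_density \<nu> (x - y)) = ennreal K1 * (\<integral>\<^sup>+u. U u y \<partial>lborel)"
      unfolding K1_def U_def d_def by (rule student_rep[OF \<nu>])
    moreover have "ennreal (student_density \<mu> y) = ennreal K2 * (\<integral>\<^sup>+s. S s y \<partial>lborel)"
      unfolding K2_def S_def d_def by (rule student_rep[OF \<mu>])
    moreover have "(\<integral>\<^sup>+s. S s y \<partial>lborel) * (\<integral>\<^sup>+u. U u y \<partial>lborel) = (\<integral>\<^sup>+s. \<integral>\<^sup>+u. S s y * U u y \<partial>lborel \<partial>lborel)"
    proof -
      have "(\<integral>\<^sup>+s. S s y \<partial>lborel) * (\<integral>\<^sup>+u. U u y \<partial>lborel) = (\<integral>\<^sup>+s. S s y * (\<integral>\<^sup>+u. U u y \<partial>lborel) \<partial>lborel)"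
        by (rule nn_integral_multc[symmetric]) measurable
      also have "\<dots> = (\<integral>\<^sup>+s. \<integral>\<^sup>+u. S s y * U u y \<partial>lborel \<partial>lborel)"
        by (rule nn_integral_cong) (rule nn_integral_cmult[symmetric], measurable)
      finally show ?thesis .
    qed
    ultimately show ?thesis using K1 K2
      by (simp add: ennreal_mult' ac_simps)
  qed
  have "(\<integral>\<^sup>+y. ennreal (student_density \<nu> (x - y)) * ennreal (student_density \<mu> y) \<partial>lborel)
      = (\<integral>\<^sup>+y. ennreal (K1 * K2) * (\<integral>\<^sup>+s. \<integral>\<^sup>+u. S s y * U u y \<partial>lborel \<partial>lborel) \<partial>lborel)"
    by (simp only: pt)
  also have "\<dots> = ennreal (K1 * K2) * (\<integral>\<^sup>+y. \<integral>\<^sup>+s. \<integral>\<^sup>+u. S s y * U u y \<partial>lborel \<partial>lborel \<partial>lborel)"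
    by (rule nn_integral_cmult) measurable
  also have "(\<integral>\<^sup>+y. \<integral>\<^sup>+s. \<integral>\<^sup>+u. S s y * U u y \<partial>lborel \<partial>lborel \<partial>lborel)
      = (\<integral>\<^sup>+s. \<integral>\<^sup>+y. \<integral>\<^sup>+u. S s y * U u y \<partial>lborel \<partial>lborel \<partial>lborel)"
    by (rule swap_lb) measurable
  also have "\<dots> = (\<integral>\<^sup>+s. \<integral>\<^sup>+u. \<integral>\<^sup>+y. S s y * U u y \<partial>lborel \<partial>lborel \<partial>lborel)"
    by (rule nn_integral_cong) (rule swap_lb, measurable)
  also have "\<dots> = (\<integral>\<^sup>+s. \<integral>\<^sup>+u. ennreal (indicator {0<..} s * indicator {0<..} u * (s powr (\<mu> + d / 2 - 1) * u powr (\<nu> + d / 2 - 1) *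
             exp (- (s + u)) * exp (- (s * u / (s + u) * (norm x)\<^sup>2)) * (pi / (s + u)) powr (d / 2))) \<partial>lborel \<partial>lborel)"
    unfolding S_def U_def d_def by (simp only: kernel_y)
  also have "\<dots> = (\<integral>\<^sup>+t. ennreal (indicator {0<..<1} t * (pi powr (d / 2) *
          (t powr (\<mu> + d / 2 - 1) * (1 - t) powr (\<nu> + d / 2 - 1)) *
          (Gamma ((\<mu> + d / 2) + (\<nu> + d / 2) - d / 2) /
           (1 + t * (1 - t) * (norm x)\<^sup>2) powr ((\<mu> + d / 2) + (\<nu> + d / 2) - d / 2)))) \<partial>lborel)"
    by (rule su_to_rt) (use \<nu> \<mu> in \<open>auto simp: d_def add_pos_nonneg\<close>)
  finally show ?thesis unfolding K1_def K2_def d_def .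
qed


lemma expand_c:
  fixes t X A :: real
  assumes t: "0 < t" "t < 1" and X: "X \<ge> 0"
  shows "(\<lambda>n. (1 + X) powr (- A) * (pochhammer A n / fact n * (X / (1 + X)) ^ n) * (1 - t + t\<^sup>2) ^ n)
         sums (1 / (1 + t * (1 - t) * X) powr A)"
proof -
  define q where "q = X / (1 + X) * (1 - t + t\<^sup>2)"
  have X1: "1 + X > 0" using X by simp
  have tt: "t * t \<le> t * 1" using t by (intro mult_left_mono) auto
  have h: "0 < 1 - t + t\<^sup>2" "1 - t + t\<^sup>2 \<le> 1" using t tt by (auto simp: power2_eq_square add_pos_nonneg)
  have q0: "0 \<le> q" unfolding q_def using X h by simp
  have "X / (1 + X) < 1" using X1 by simp
  moreover have "X / (1 + X) * (1 - t + t\<^sup>2) \<le> X / (1 + X)"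
    using h X X1 by (intro mult_left_le) auto
  ultimately have q1: "q < 1" unfolding q_def by linarith
  have "(\<lambda>n. pochhammer A n / fact n * q ^ n) sums (1 - q) powr (- A)"
    by (rule binom_poch[OF q0 q1])
  then have S: "(\<lambda>n. (1 + X) powr (- A) * (pochhammer A n / fact n * q ^ n)) sums ((1 + X) powr (- A) * (1 - q) powr (- A))"
    by (rule sums_mult)
  have EF: "(1 + X) powr (- A) * (pochhammer A n / fact n * q ^ n)
     = (1 + X) powr (- A) * (pochhammer A n / fact n * (X / (1 + X)) ^ n) * (1 - t + t\<^sup>2) ^ n" for n
    unfolding q_def power_mult_distrib by (simp only: mult.assoc)
  have EV: "(1 + X) powr (- A) * (1 - q) powr (- A) = 1 / (1 + t * (1 - t) * X) powr A"
  proof -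
    have "1 - q = (1 + t * (1 - t) * X) / (1 + X)" unfolding q_def using X1
      by (simp add: field_simps power2_eq_square)
    moreover have c: "1 + t * (1 - t) * X > 0" using t X by (simp add: add_pos_nonneg)
    ultimately have e1: "(1 - q) powr (- A) = (1 + X) powr A / (1 + t * (1 - t) * X) powr A"
      using X1 by (simp add: powr_minus_divide powr_divide)
    have e2: "(1 + X) powr (- A) = 1 / (1 + X) powr A" by (rule powr_minus_divide)
    have "(1 + X) powr A > 0" using X1 by simp
    then show ?thesis unfolding e1 e2 by simp
  qed
  show ?thesis using S unfolding EF EV .
qed


lemma coeff_identity:
  fixes \<nu> \<mu> :: real and x :: "'a::euclidean_space" and n :: nat
  assumes \<nu>: "\<nu> > 0" and \<mu>: "\<mu> > 0"
  defines "D \<equiv> real DIM('a) / 2"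
  defines "A \<equiv> (\<mu> + D) + (\<nu> + D) - D"
  defines "X \<equiv> (norm x)\<^sup>2"
  shows "1 / (Gamma \<nu> * pi powr D) * (1 / (Gamma \<mu> * pi powr D)) *
      (pi powr D * Gamma A * ((1 + X) powr (- A) * (pochhammer A n / fact n * (X / (1 + X)) ^ n))) *
      integral {0..1} (\<lambda>t::real. t powr (\<mu> + real DIM('a) / 2 - 1) * (1 - t) powr (\<nu> + real DIM('a) / 2 - 1) * (1 - t + t\<^sup>2) ^ n)
    = c_coeff \<nu> \<mu> DIM('a) n * phi_density n (\<nu> + \<mu>) x"
proof -
  define J where "J = integral {0..1} (\<lambda>t::real. t powr (\<mu> + real DIM('a) / 2 - 1) * (1 - t) powr (\<nu> + real DIM('a) / 2 - 1) * (1 - t + t\<^sup>2) ^ n)"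
  have D: "D > 0" unfolding D_def by simp
  have A: "A = \<nu> + \<mu> + D" unfolding A_def by simp
  have Apos: "A > 0" using \<nu> \<mu> D A by simp
  have X1: "1 + X > 0" unfolding X_def by (simp add: add_pos_nonneg)
  have P1: "Gamma (real n + D) = pochhammer D n * Gamma D"
  proof -
    have "D \<notin> \<int>\<^sub>\<le>\<^sub>0" using D by (auto elim!: nonpos_Ints_cases)
    then have "pochhammer D n = Gamma (D + real n) / Gamma D" by (rule pochhammer_Gamma)
    then show ?thesis using Gamma_real_pos[OF D] by (simp add: field_simps add.commute)
  qed
  have P2: "Gamma (\<nu> + \<mu> + (real n + D)) = pochhammer A n * Gamma A"
  proof -
    have "A \<notin> \<int>\<^sub>\<le>\<^sub>0" using Apos by (auto elim!: nonpos_Ints_cases)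
    then have "pochhammer A n = Gamma (A + real n) / Gamma A" by (rule pochhammer_Gamma)
    then show ?thesis using Gamma_real_pos[OF Apos] unfolding A by (simp add: field_simps add_ac)
  qed
  have P3: "(1 + X) powr (\<nu> + \<mu> + real n + D) = (1 + X) powr A * (1 + X) ^ n"
    using X1 unfolding A by (simp add: powr_add powr_realpow add.commute add.left_commute)
  have P4: "norm x ^ (2 * n) = X ^ n" unfolding X_def by (simp add: power_mult)
  have P5: "(1 + X) powr (- A) = 1 / (1 + X) powr A" by (rule powr_minus_divide)
  have g: "Gamma \<nu> > 0" "Gamma \<mu> > 0" "Gamma D > 0" "Gamma A > 0" "Gamma (\<nu> + \<mu>) > 0"
    using \<nu> \<mu> D Apos by (auto intro!: Gamma_real_pos)
  have pp: "pochhammer D n > 0" "pochhammer A n > 0" using D Apos by (auto intro!: pochhammer_pos)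
  have pi: "pi powr D > 0" "(1 + X) powr A > 0" using X1 by auto
  have "c_coeff \<nu> \<mu> DIM('a) n * phi_density n (\<nu> + \<mu>) x
      = Gamma (\<nu> + \<mu>) / (Gamma \<nu> * Gamma \<mu>) * pochhammer D n / fact n * J *
        (Gamma D / (pi powr D * (Gamma (\<nu> + \<mu>) * Gamma (real n + D) / Gamma (\<nu> + \<mu> + (real n + D))))
         * norm x ^ (2 * n) / (1 + X) powr (\<nu> + \<mu> + real n + D))"
    unfolding c_coeff_def phi_density_def Beta_def J_def D_def X_def by simp
  also have "\<dots> = 1 / (Gamma \<nu> * pi powr D) * (1 / (Gamma \<mu> * pi powr D)) *
      (pi powr D * Gamma A * ((1 + X) powr (- A) * (pochhammer A n / fact n * (X / (1 + X)) ^ n))) * J"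
    unfolding P1 P2 P3 P4 P5 using g pp pi X1
    by (simp add: field_simps power_divide)
  finally show ?thesis unfolding J_def by simp
qed


lemma conv_series:
  fixes \<nu> \<mu> :: real and x :: "'a::euclidean_space"
  assumes \<nu>: "\<nu> > 0" and \<mu>: "\<mu> > 0"
  shows "(\<integral>\<^sup>+y. ennreal (student_density \<nu> (x - y)) * ennreal (student_density \<mu> y) \<partial>lborel)
       = ennreal (\<Sum>n. c_coeff \<nu> \<mu> DIM('a) n * phi_density n (\<nu> + \<mu>) x)"
proof -
  define D where "D = real DIM('a) / 2"
  define A where "A = (\<mu> + D) + (\<nu> + D) - D"
  define X where "X = (norm x)\<^sup>2"
  define K where "K = 1 / (Gamma \<nu> * pi powr D) * (1 / (Gamma \<mu> * pi powr D))"
  define Bt where "Bt t = t powr (\<mu> + real DIM('a) / 2 - 1) * (1 - t) powr (\<nu> + real DIM('a) / 2 - 1)" for t :: real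
  define T where "T n = pi powr D * Gamma A * ((1 + X) powr (- A) * (pochhammer A n / fact n * (X / (1 + X)) ^ n))" for n
  define J where "J n = integral {0..1} (\<lambda>t::real. t powr (\<mu> + real DIM('a) / 2 - 1) * (1 - t) powr (\<nu> + real DIM('a) / 2 - 1) * (1 - t + t\<^sup>2) ^ n)" for n
  have Dp: "D > 0" unfolding D_def by simp
  have Apos: "A > 0" using \<nu> \<mu> Dp unfolding A_def by simp
  have X: "X \<ge> 0" unfolding X_def by simp
  have X1: "1 + X > 0" using X by simp
  have K0: "K \<ge> 0" unfolding K_def using \<nu> \<mu> by (simp add: Gamma_real_pos less_imp_le)
  have T0: "T n \<ge> 0" for n unfolding T_def using Apos X
    by (intro mult_nonneg_nonneg) (auto intro!: Gamma_real_pos less_imp_le pochhammer_pos divide_pos_pos)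
  have pb: "\<mu> + D > 0" "\<nu> + D > 0" using \<nu> \<mu> Dp by auto
  have gm: "(\<lambda>t::real. (1 - t + t\<^sup>2) ^ n) \<in> borel_measurable borel" for n by measurable
  have g0: "0 \<le> (1 - t + t\<^sup>2) ^ n" if "0 \<le> t" "t \<le> 1" for t :: real and n
  proof -
    have "0 \<le> 1 - t" using that by simp
    then show ?thesis by (intro zero_le_power) (simp add: add_nonneg_nonneg)
  qed
  have g1: "(1 - t + t\<^sup>2) ^ n \<le> 1" if "0 \<le> t" "t \<le> 1" for t :: real and n
  proof -
    have "t * t \<le> t * 1" using that by (intro mult_left_mono) auto
    then have "1 - t + t\<^sup>2 \<le> 1" by (simp add: power2_eq_square)
    then show ?thesis using g0[OF that, of 1] by (intro power_le_one) auto
  qed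
  note Jl = Jlem[OF pb gm g0 g1, unfolded D_def]
  have J0: "J n \<ge> 0" for n unfolding J_def
    by (rule integral_nonneg[OF Jl(2)]) (auto intro!: mult_nonneg_nonneg g0)
  have conv: "(\<integral>\<^sup>+y. ennreal (student_density \<nu> (x - y)) * ennreal (student_density \<mu> y) \<partial>lborel)
    = ennreal K * (\<integral>\<^sup>+t. ennreal (indicator {0<..<1} t * (pi powr D * Bt t * (Gamma A / (1 + t * (1 - t) * X) powr A))) \<partial>lborel)"
    using conv_formula[OF \<nu> \<mu>, of x] unfolding K_def D_def A_def X_def Bt_def by simp
  have expand: "ennreal (indicator {0<..<1} t * (pi powr D * Bt t * (Gamma A / (1 + t * (1 - t) * X) powr A)))
      = (\<Sum>n. ennreal (indicator {0<..<1} t * (T n * (Bt t * (1 - t + t\<^sup>2) ^ n))))" for t :: real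
  proof (cases "0 < t \<and> t < 1")
    case True
    have Bt0: "Bt t \<ge> 0" unfolding Bt_def by simp
    have S0: "(\<lambda>n. (pi powr D * Gamma A * Bt t) * ((1 + X) powr (- A) * (pochhammer A n / fact n * (X / (1 + X)) ^ n) * (1 - t + t\<^sup>2) ^ n))
       sums ((pi powr D * Gamma A * Bt t) * (1 / (1 + t * (1 - t) * X) powr A))"
      by (rule sums_mult[OF expand_c]) (use True X in auto)
    have EF: "(\<lambda>n. (pi powr D * Gamma A * Bt t) * ((1 + X) powr (- A) * (pochhammer A n / fact n * (X / (1 + X)) ^ n) * (1 - t + t\<^sup>2) ^ n))
       = (\<lambda>n. indicator {0<..<1} t * (T n * (Bt t * (1 - t + t\<^sup>2) ^ n)))"
      using True unfolding T_def by (simp add: ac_simps)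
    have EV: "(pi powr D * Gamma A * Bt t) * (1 / (1 + t * (1 - t) * X) powr A)
       = indicator {0<..<1} t * (pi powr D * Bt t * (Gamma A / (1 + t * (1 - t) * X) powr A))"
      using True by simp
    have S: "(\<lambda>n. indicator {0<..<1} t * (T n * (Bt t * (1 - t + t\<^sup>2) ^ n)))
       sums (indicator {0<..<1} t * (pi powr D * Bt t * (Gamma A / (1 + t * (1 - t) * X) powr A)))"
      using S0 unfolding EF EV .
    have "(\<Sum>n. ennreal (indicator {0<..<1} t * (T n * (Bt t * (1 - t + t\<^sup>2) ^ n))))
       = ennreal (indicator {0<..<1} t * (pi powr D * Bt t * (Gamma A / (1 + t * (1 - t) * X) powr A)))"
      by (rule suminf_ennreal_eq[OF _ S]) (use True T0 Bt0 g0 in \<open>auto intro!: mult_nonneg_nonneg\<close>)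
    then show ?thesis by simp
  next
    case False
    then have "indicator {0<..<1} t = (0::real)" by (auto simp: indicator_def)
    then show ?thesis by simp
  qed
  have termint: "(\<integral>\<^sup>+t. ennreal (indicator {0<..<1} t * (T n * (Bt t * (1 - t + t\<^sup>2) ^ n))) \<partial>lborel)
      = ennreal (T n) * ennreal (J n)" for n
  proof -
    have "(\<integral>\<^sup>+t. ennreal (indicator {0<..<1} t * (T n * (Bt t * (1 - t + t\<^sup>2) ^ n))) \<partial>lborel)
       = (\<integral>\<^sup>+t. ennreal (T n) * ennreal (indicator {0<..<1} t * (Bt t * (1 - t + t\<^sup>2) ^ n)) \<partial>lborel)"
      by (rule nn_integral_cong) (simp add: ennreal_mult'[OF T0, symmetric] ac_simps)
    also have "\<dots> = ennreal (T n) * (\<integral>\<^sup>+t. ennreal (indicator {0<..<1} t * (Bt t * (1 - t + t\<^sup>2) ^ n)) \<partial>lborel)"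
      by (rule nn_integral_cmult) (unfold Bt_def, measurable)
    also have "(\<integral>\<^sup>+t. ennreal (indicator {0<..<1} t * (Bt t * (1 - t + t\<^sup>2) ^ n)) \<partial>lborel) = ennreal (J n)"
      using Jl(1)[of n] unfolding Bt_def J_def by (simp add: ac_simps)
    finally show ?thesis .
  qed
  have "(\<integral>\<^sup>+t. ennreal (indicator {0<..<1} t * (pi powr D * Bt t * (Gamma A / (1 + t * (1 - t) * X) powr A))) \<partial>lborel)
      = (\<integral>\<^sup>+t. (\<Sum>n. ennreal (indicator {0<..<1} t * (T n * (Bt t * (1 - t + t\<^sup>2) ^ n)))) \<partial>lborel)"
    by (simp only: expand)
  also have "\<dots> = (\<Sum>n. (\<integral>\<^sup>+t. ennreal (indicator {0<..<1} t * (T n * (Bt t * (1 - t + t\<^sup>2) ^ n))) \<partial>lborel))"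
    by (rule nn_integral_suminf) (unfold Bt_def, measurable)
  also have "\<dots> = (\<Sum>n. ennreal (T n) * ennreal (J n))" by (simp only: termint)
  finally have I1: "(\<integral>\<^sup>+t. ennreal (indicator {0<..<1} t * (pi powr D * Bt t * (Gamma A / (1 + t * (1 - t) * X) powr A))) \<partial>lborel)
      = (\<Sum>n. ennreal (T n) * ennreal (J n))" .
  have cid: "K * T n * J n = c_coeff \<nu> \<mu> DIM('a) n * phi_density n (\<nu> + \<mu>) x" for n
    using coeff_identity[OF \<nu> \<mu>, of x n] unfolding K_def T_def J_def D_def A_def X_def by simp
  have I2: "ennreal K * (\<Sum>n. ennreal (T n) * ennreal (J n)) = (\<Sum>n. ennreal (c_coeff \<nu> \<mu> DIM('a) n * phi_density n (\<nu> + \<mu>) x))"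
  proof -
    have "ennreal K * (\<Sum>n. ennreal (T n) * ennreal (J n)) = (\<Sum>n. ennreal K * (ennreal (T n) * ennreal (J n)))"
      by simp
    also have "\<dots> = (\<Sum>n. ennreal (K * T n * J n))"
      using K0 T0 J0 by (simp add: ennreal_mult' mult.assoc)
    finally show ?thesis by (simp only: cid)
  qed
  have fin: "(\<integral>\<^sup>+t. ennreal (indicator {0<..<1} t * (pi powr D * Bt t * (Gamma A / (1 + t * (1 - t) * X) powr A))) \<partial>lborel) < top"
  proof -
    have "(\<integral>\<^sup>+t. ennreal (indicator {0<..<1} t * (pi powr D * Bt t * (Gamma A / (1 + t * (1 - t) * X) powr A))) \<partial>lborel)
        \<le> (\<integral>\<^sup>+t. ennreal (pi powr D * Gamma A) * ennreal (indicator {0<..<1} t * (t powr (\<mu> + D - 1) * (1 - t) powr (\<nu> + D - 1))) \<partial>lborel)"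
    proof (rule nn_integral_mono)
      fix t :: real
      show "ennreal (indicator {0<..<1} t * (pi powr D * Bt t * (Gamma A / (1 + t * (1 - t) * X) powr A)))
          \<le> ennreal (pi powr D * Gamma A) * ennreal (indicator {0<..<1} t * (t powr (\<mu> + D - 1) * (1 - t) powr (\<nu> + D - 1)))"
      proof (cases "0 < t \<and> t < 1")
        case True
        have c1: "1 \<le> 1 + t * (1 - t) * X" using True X by simp
        have "1 \<le> (1 + t * (1 - t) * X) powr A" using c1 Apos by (simp add: ge_one_powr_ge_zero)
        then have q: "Gamma A / (1 + t * (1 - t) * X) powr A \<le> Gamma A"
          using Gamma_real_pos[OF Apos] by (simp add: divide_le_eq)
        have "pi powr D * Bt t * (Gamma A / (1 + t * (1 - t) * X) powr A) \<le> pi powr D * Bt t * Gamma A"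
          by (rule mult_left_mono[OF q]) (simp add: Bt_def)
        then show ?thesis using True Gamma_real_pos[OF Apos]
          by (subst ennreal_mult'[symmetric]) (auto simp: Bt_def D_def ac_simps intro!: ennreal_leI)
      next
        case False
        then have "indicator {0<..<1} t = (0::real)" by (auto simp: indicator_def)
        then show ?thesis by simp
      qed
    qed
    also have "\<dots> = ennreal (pi powr D * Gamma A) * ennreal (Beta (\<mu> + D) (\<nu> + D))"
      by (subst nn_integral_cmult) (auto simp: beta_nn[OF pb])
    also have "\<dots> < top" by (simp add: ennreal_mult_less_top)
    finally show ?thesis .
  qed
  have sumeq: "(\<integral>\<^sup>+y. ennreal (student_density \<nu> (x - y)) * ennreal (student_density \<mu> y) \<partial>lborel)
      = (\<Sum>n. ennreal (c_coeff \<nu> \<mu> DIM('a) n * phi_density n (\<nu> + \<mu>) x))"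
    unfolding conv I1 I2 ..
  have nn: "0 \<le> c_coeff \<nu> \<mu> DIM('a) n * phi_density n (\<nu> + \<mu>) x" for n
    unfolding cid[symmetric] using K0 T0 J0 by simp
  have "(\<Sum>n. ennreal (c_coeff \<nu> \<mu> DIM('a) n * phi_density n (\<nu> + \<mu>) x)) \<noteq> top"
  proof -
    have "(\<integral>\<^sup>+t. ennreal (indicator {0<..<1} t * (pi powr D * Bt t * (Gamma A / (1 + t * (1 - t) * X) powr A))) \<partial>lborel) \<noteq> top"
      using fin by simp
    then show ?thesis unfolding sumeq[symmetric] conv by (simp add: ennreal_mult_eq_top_iff)
  qed
  then have "summable (\<lambda>n. c_coeff \<nu> \<mu> DIM('a) n * phi_density n (\<nu> + \<mu>) x)"
    by (rule summable_suminf_not_top[OF nn])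
  then show ?thesis unfolding sumeq by (rule suminf_ennreal2[OF nn])
qed


lemma g_bounds:
  fixes t :: real assumes "0 \<le> t" "t \<le> 1"
  shows "3 / 4 \<le> 1 - t + t\<^sup>2" "1 - t + t\<^sup>2 \<le> 1" "0 \<le> 1 - t + t\<^sup>2"
proof -
  have "0 \<le> (t - 1 / 2)\<^sup>2" by simp
  then show "3 / 4 \<le> 1 - t + t\<^sup>2" by (simp add: power2_eq_square algebra_simps)
  then show "0 \<le> 1 - t + t\<^sup>2" by linarith
  have "t * t \<le> t * 1" using assms by (intro mult_left_mono) auto
  then show "1 - t + t\<^sup>2 \<le> 1" by (simp add: power2_eq_square)
qed

lemma c_pos:
  fixes \<nu> \<mu> :: real and d n :: nat
  assumes \<nu>: "\<nu> > 0" and \<mu>: "\<mu> > 0" and d: "d > 0"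
  shows "c_coeff \<nu> \<mu> d n > 0"
proof -
  define D where "D = real d / 2"
  have Dp: "D > 0" using d unfolding D_def by simp
  have pb: "\<mu> + D > 0" "\<nu> + D > 0" using \<nu> \<mu> Dp by auto
  have gm: "(\<lambda>t::real. (1 - t + t\<^sup>2) ^ n) \<in> borel_measurable borel" by measurable
  note Jl = Jlem[OF pb gm]
  have int1: "(\<lambda>t. t powr (\<mu> + D - 1) * (1 - t) powr (\<nu> + D - 1) * (1 - t + t\<^sup>2) ^ n) integrable_on {0..1}"
    by (rule Jl(2)) (auto intro!: zero_le_power power_le_one g_bounds)
  have hB: "((\<lambda>t. (3 / 4) ^ n * (t powr (\<mu> + D - 1) * (1 - t) powr (\<nu> + D - 1))) has_integral (3 / 4) ^ n * Beta (\<mu> + D) (\<nu> + D)) {0..1}"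
    by (rule has_integral_mult_right[OF has_integral_Beta_real[OF pb]])
  have "(3 / 4) ^ n * Beta (\<mu> + D) (\<nu> + D) \<le> integral {0..1} (\<lambda>t. t powr (\<mu> + D - 1) * (1 - t) powr (\<nu> + D - 1) * (1 - t + t\<^sup>2) ^ n)"
  proof -
    have "integral {0..1} (\<lambda>t. (3 / 4) ^ n * (t powr (\<mu> + D - 1) * (1 - t) powr (\<nu> + D - 1)))
        \<le> integral {0..1} (\<lambda>t. t powr (\<mu> + D - 1) * (1 - t) powr (\<nu> + D - 1) * (1 - t + t\<^sup>2) ^ n)"
    proof (rule integral_le[OF has_integral_integrable[OF hB] int1])
      fix t :: real assume t: "t \<in> {0..1}"
      have "(3 / 4) ^ n \<le> (1 - t + t\<^sup>2) ^ n" using t by (intro power_mono g_bounds) auto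
      then show "(3 / 4) ^ n * (t powr (\<mu> + D - 1) * (1 - t) powr (\<nu> + D - 1))
          \<le> t powr (\<mu> + D - 1) * (1 - t) powr (\<nu> + D - 1) * (1 - t + t\<^sup>2) ^ n"
        by (subst mult.commute) (intro mult_left_mono, auto)
    qed
    then show ?thesis using integral_unique[OF hB] by simp
  qed
  moreover have "Beta (\<mu> + D) (\<nu> + D) > 0" "Beta \<nu> \<mu> > 0"
    using pb \<nu> \<mu> by (auto simp: Beta_def Gamma_real_pos intro!: divide_pos_pos mult_pos_pos Gamma_real_pos add_pos_pos)
  moreover have "pochhammer D n > 0" using Dp by (rule pochhammer_pos)
  ultimately show ?thesis unfolding c_coeff_def D_def[symmetric]
    by (intro mult_pos_pos divide_pos_pos) (auto intro: less_le_trans[rotated])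
qed

lemma c_sums:
  fixes \<nu> \<mu> :: real and d :: nat
  assumes \<nu>: "\<nu> > 0" and \<mu>: "\<mu> > 0" and d: "d > 0"
  shows "(\<lambda>n. c_coeff \<nu> \<mu> d n) sums 1"
proof -
  define D where "D = real d / 2"
  have Dp: "D > 0" using d unfolding D_def by simp
  have pb: "\<mu> + D > 0" "\<nu> + D > 0" using \<nu> \<mu> Dp by auto
  define B where "B = Beta \<nu> \<mu>"
  have B: "B > 0" unfolding B_def using \<nu> \<mu>
    by (auto simp: Beta_def intro!: divide_pos_pos mult_pos_pos Gamma_real_pos add_pos_pos)
  define Bt where "Bt t = t powr (\<mu> + D - 1) * (1 - t) powr (\<nu> + D - 1)" for t :: real
  define a where "a n = 1 / B * pochhammer D n / fact n" for n
  have a0: "a n \<ge> 0" for n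
  proof -
    have "pochhammer D n > 0" using Dp by (rule pochhammer_pos)
    then show ?thesis unfolding a_def using B by simp
  qed
  have gm: "(\<lambda>t::real. (1 - t + t\<^sup>2) ^ n) \<in> borel_measurable borel" for n by measurable
  note Jl = Jlem[OF pb gm]
  have cdef: "c_coeff \<nu> \<mu> d n = a n * integral {0..1} (\<lambda>t. Bt t * (1 - t + t\<^sup>2) ^ n)" for n
    unfolding c_coeff_def a_def Bt_def D_def B_def by simp
  have cn: "c_coeff \<nu> \<mu> d n \<ge> 0" for n using c_pos[OF \<nu> \<mu> d, of n] by simp
  have termint: "ennreal (c_coeff \<nu> \<mu> d n) = (\<integral>\<^sup>+t. ennreal (indicator {0<..<1} t * (a n * (Bt t * (1 - t + t\<^sup>2) ^ n))) \<partial>lborel)" for n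
  proof -
    have "(\<integral>\<^sup>+t. ennreal (indicator {0<..<1} t * (a n * (Bt t * (1 - t + t\<^sup>2) ^ n))) \<partial>lborel)
       = (\<integral>\<^sup>+t. ennreal (a n) * ennreal (indicator {0<..<1} t * (Bt t * (1 - t + t\<^sup>2) ^ n)) \<partial>lborel)"
      by (rule nn_integral_cong) (simp add: ennreal_mult'[OF a0, symmetric] ac_simps)
    also have "\<dots> = ennreal (a n) * (\<integral>\<^sup>+t. ennreal (indicator {0<..<1} t * (Bt t * (1 - t + t\<^sup>2) ^ n)) \<partial>lborel)"
      by (rule nn_integral_cmult) (unfold Bt_def, measurable)
    also have "(\<integral>\<^sup>+t. ennreal (indicator {0<..<1} t * (Bt t * (1 - t + t\<^sup>2) ^ n)) \<partial>lborel)
        = ennreal (integral {0..1} (\<lambda>t. Bt t * (1 - t + t\<^sup>2) ^ n))"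
      using Jl(1)[of n] unfolding Bt_def by (simp add: ac_simps g_bounds zero_le_power power_le_one)
    also have "ennreal (a n) * \<dots> = ennreal (c_coeff \<nu> \<mu> d n)"
      unfolding cdef by (rule ennreal_mult'[OF a0, symmetric])
    finally show ?thesis ..
  qed
  have expand: "(\<Sum>n. ennreal (indicator {0<..<1} t * (a n * (Bt t * (1 - t + t\<^sup>2) ^ n))))
      = ennreal (indicator {0<..<1} t * (1 / B * (t powr (\<mu> - 1) * (1 - t) powr (\<nu> - 1))))" for t :: real
  proof (cases "0 < t \<and> t < 1")
    case True
    then have t: "0 < t" "t < 1" by auto
    have q0: "0 \<le> 1 - t + t\<^sup>2" and q1: "1 - t + t\<^sup>2 < 1"
      using g_bounds[of t] t by (auto simp: power2_eq_square)
    have S0: "(\<lambda>n. (1 / B * Bt t) * (pochhammer D n / fact n * (1 - t + t\<^sup>2) ^ n))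
        sums ((1 / B * Bt t) * (1 - (1 - t + t\<^sup>2)) powr (- D))"
      by (rule sums_mult[OF binom_poch[OF q0 q1]])
    have EF: "(\<lambda>n. (1 / B * Bt t) * (pochhammer D n / fact n * (1 - t + t\<^sup>2) ^ n))
        = (\<lambda>n. indicator {0<..<1} t * (a n * (Bt t * (1 - t + t\<^sup>2) ^ n)))"
      using True unfolding a_def by (simp add: ac_simps)
    have EV: "(1 / B * Bt t) * (1 - (1 - t + t\<^sup>2)) powr (- D)
        = indicator {0<..<1} t * (1 / B * (t powr (\<mu> - 1) * (1 - t) powr (\<nu> - 1)))"
    proof -
      have "1 - (1 - t + t\<^sup>2) = t * (1 - t)" by (simp add: power2_eq_square algebra_simps)
      then have "(1 - (1 - t + t\<^sup>2)) powr (- D) = t powr (- D) * (1 - t) powr (- D)"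
        using t by (simp add: powr_mult)
      moreover have "t powr (\<mu> + D - 1) * t powr (- D) = t powr (\<mu> - 1)"
        using t by (simp add: powr_add[symmetric])
      moreover have "(1 - t) powr (\<nu> + D - 1) * (1 - t) powr (- D) = (1 - t) powr (\<nu> - 1)"
        using t by (simp add: powr_add[symmetric])
      ultimately show ?thesis using True unfolding Bt_def
        by (simp add: ac_simps)
    qed
    have S: "(\<lambda>n. indicator {0<..<1} t * (a n * (Bt t * (1 - t + t\<^sup>2) ^ n)))
        sums (indicator {0<..<1} t * (1 / B * (t powr (\<mu> - 1) * (1 - t) powr (\<nu> - 1))))"
      using S0 unfolding EF EV .
    show ?thesis
      by (rule suminf_ennreal_eq[OF _ S]) (use True a0 q0 in \<open>auto simp: Bt_def intro!: mult_nonneg_nonneg\<close>)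
  next
    case False
    then have "indicator {0<..<1} t = (0::real)" by (auto simp: indicator_def)
    then show ?thesis by simp
  qed
  have "(\<Sum>n. ennreal (c_coeff \<nu> \<mu> d n))
      = (\<Sum>n. (\<integral>\<^sup>+t. ennreal (indicator {0<..<1} t * (a n * (Bt t * (1 - t + t\<^sup>2) ^ n))) \<partial>lborel))"
    by (simp only: termint)
  also have "\<dots> = (\<integral>\<^sup>+t. (\<Sum>n. ennreal (indicator {0<..<1} t * (a n * (Bt t * (1 - t + t\<^sup>2) ^ n)))) \<partial>lborel)"
    by (rule nn_integral_suminf[symmetric]) (unfold Bt_def, measurable)
  also have "\<dots> = (\<integral>\<^sup>+t. ennreal (1 / B) * ennreal (indicator {0<..<1} t * (t powr (\<mu> - 1) * (1 - t) powr (\<nu> - 1))) \<partial>lborel)"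
    unfolding expand using B by (intro nn_integral_cong) (simp add: ennreal_mult'[symmetric] ac_simps)
  also have "\<dots> = ennreal (1 / B) * ennreal (Beta \<mu> \<nu>)"
    by (subst nn_integral_cmult) (auto simp: beta_nn[OF \<mu> \<nu>])
  also have "\<dots> = ennreal 1"
    using B unfolding B_def by (simp add: ennreal_mult'[symmetric] Beta_commute[of \<mu> \<nu>])
  finally have E1: "(\<Sum>n. ennreal (c_coeff \<nu> \<mu> d n)) = ennreal 1" .
  then have sm: "summable (\<lambda>n. c_coeff \<nu> \<mu> d n)"
    by (intro summable_suminf_not_top cn) simp
  have "ennreal (\<Sum>n. c_coeff \<nu> \<mu> d n) = ennreal 1"
    using E1 suminf_ennreal2[OF cn sm] by simp
  then have "(\<Sum>n. c_coeff \<nu> \<mu> d n) = 1"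
    using suminf_nonneg[OF sm cn] by (subst (asm) ennreal_inj) auto
  then show ?thesis using summable_sums[OF sm] by simp
qed


theorem theorem3:
  fixes M :: "'s measure" and T1 T2 :: "'s \<Rightarrow> 'a::euclidean_space" and \<nu> \<mu> :: real
  assumes "prob_space M" and "\<nu> > 0" and "\<mu> > 0"
    and "distributed M lborel T1 (\<lambda>t. ennreal (student_density \<nu> t))"
    and "distributed M lborel T2 (\<lambda>t. ennreal (student_density \<mu> t))"
    and "prob_space.indep_var M borel T1 borel T2"
  shows "distributed M lborel (\<lambda>\<omega>. T1 \<omega> + T2 \<omega>)
           (\<lambda>x. ennreal (\<Sum>n. c_coeff \<nu> \<mu> DIM('a) n * phi_density n (\<nu> + \<mu>) x))
         \<and> (\<forall>n. c_coeff \<nu> \<mu> DIM('a) n > 0)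
         \<and> (\<lambda>n. c_coeff \<nu> \<mu> DIM('a) n) sums 1"
proof (intro conjI allI)
  have "distributed M lborel (\<lambda>\<omega>. T1 \<omega> + T2 \<omega>)
     (\<lambda>x. \<integral>\<^sup>+y. ennreal (student_density \<nu> (x - y)) * ennreal (student_density \<mu> y) \<partial>lborel)"
    by (rule distributed_add_euclid[OF assms(1) assms(6) assms(4) assms(5)])
  moreover have "(\<lambda>x::'a. \<integral>\<^sup>+y. ennreal (student_density \<nu> (x - y)) * ennreal (student_density \<mu> y) \<partial>lborel)
     = (\<lambda>x::'a. ennreal (\<Sum>n. c_coeff \<nu> \<mu> DIM('a) n * phi_density n (\<nu> + \<mu>) x))"
    by (rule ext) (rule conv_series[OF assms(2) assms(3)])
  ultimately show "distributed M lborel (\<lambda>\<omega>. T1 \<omega> + T2 \<omega>)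
           (\<lambda>x. ennreal (\<Sum>n. c_coeff \<nu> \<mu> DIM('a) n * phi_density n (\<nu> + \<mu>) x))" by simp
  show "c_coeff \<nu> \<mu> DIM('a) n > 0" for n
    by (rule c_pos[OF assms(2) assms(3)]) simp
  show "(\<lambda>n. c_coeff \<nu> \<mu> DIM('a) n) sums 1"
    by (rule c_sums[OF assms(2) assms(3)]) simp
qed


end
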